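(* Let $X_1,\dots,X_n$ be independent (not necessarily identically distributed) random variables and $X_1',\dots,X_n'$ be independent of them, with $X_1',\dots,X_n'$ independent and $X_i'$ equal in distribution to $X_i$. Let $\mathcal{G}$ be a countable class of bounded measurable real functions and $L:\mathcal{G}\to[0,\infty)$ satisfy $\sum_{g\in\mathcal{G}}e^{-L(g)}\le1$. Then for every $\gamma>0$, $$\mathbb{E}\sup_{g\in\mathcal{G}}\Big\{D_n'(g)-D_n(g)-\frac{\gamma}{n}L(g)-\frac{1}{2\gamma}s^2(g)\Big\}\le0,$$ where $D_n(g)=\frac1n\sum_{i=1}^ng^2(X_i)$, $D_n'(g)=\frac1n\sum_{i=1}^ng^2(X_i')$ and $s^2(g)=\frac1n\sum_{i=1}^n\big(g^2(X_i)-g^2(X_i')\big)^2$. *)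

theory Defs
  imports "HOL-Probability.Probability"
begin

definition Dn :: "nat \<Rightarrow> ('b \<Rightarrow> real) \<Rightarrow> (nat \<Rightarrow> 'a \<Rightarrow> 'b) \<Rightarrow> 'a \<Rightarrow> real" where
  "Dn n g X \<omega> = (1 / real n) * (\<Sum>i<n. (g (X i \<omega>))\<^sup>2)"

definition s2 :: "nat \<Rightarrow> ('b \<Rightarrow> real) \<Rightarrow> (nat \<Rightarrow> 'a \<Rightarrow> 'b) \<Rightarrow> (nat \<Rightarrow> 'a \<Rightarrow> 'b) \<Rightarrow> 'a \<Rightarrow> real" where
  "s2 n g X X' \<omega> = (1 / real n) * (\<Sum>i<n. ((g (X i \<omega>))\<^sup>2 - (g (X' i \<omega>))\<^sup>2)\<^sup>2)"

end

theory Submission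
  imports Defs
begin


lemma cosh_le_exp_sq_nonneg:
  fixes t :: real assumes "t \<ge> 0"
  shows "exp t + exp (-t) \<le> 2 * exp (t^2/2)"
proof -
  have h: "-(2*t) * (1/2) + ln (1 + (1/2) * (exp (2*t) - 1)) \<le> (2*t)^2/8"
    using Hoeffdings_lemma_aux[of "2*t" "1/2"] assms by simp
  have pos: "0 < 1 + (1/2) * (exp (2*t) - 1)"
    using exp_gt_zero[of "2*t"] by (auto simp: algebra_simps intro!: add_pos_pos)
  have "ln (1 + (1/2) * (exp (2*t) - 1)) \<le> t + t^2/2"
    using h by (simp add: power2_eq_square)
  hence "1 + (1/2) * (exp (2*t) - 1) \<le> exp (t + t^2/2)"
    using pos by (metis exp_le_cancel_iff exp_ln)
  hence "(1 + exp (2*t)) / 2 \<le> exp (t + t^2/2)"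
    by (simp add: field_simps)
  hence A: "(1 + exp (2*t)) / 2 * exp (-t) \<le> exp (t + t^2/2) * exp (-t)"
    by (intro mult_right_mono) auto
  have B: "exp (t + t^2/2) * exp (-t) = exp (t^2/2)"
    by (subst exp_add[symmetric]) simp
  have C: "exp (2*t) * exp (-t) = exp t"
    by (subst exp_add[symmetric]) simp
  have D: "(1 + exp (2*t)) / 2 * exp (-t) = (exp (-t) + exp (2*t) * exp (-t)) / 2"
    by (simp add: algebra_simps)
  have "(exp (-t) + exp t) / 2 \<le> exp (t^2/2)" using A unfolding D C B .
  thus ?thesis by simp
qed

lemma cosh_le_exp_sq:
  fixes t :: real
  shows "exp t + exp (-t) \<le> 2 * exp (t^2/2)"
proof (cases "t \<ge> 0")
  case True thus ?thesis by (rule cosh_le_exp_sq_nonneg)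
next
  case False
  hence "exp (-t) + exp (-(-t)) \<le> 2 * exp ((-t)^2/2)"
    by (intro cosh_le_exp_sq_nonneg) auto
  thus ?thesis by simp
qed

lemma psi_sym:
  fixes a \<gamma> :: real assumes "\<gamma> > 0"
  shows "exp (a/\<gamma> - a^2/(2*\<gamma>^2)) + exp ((-a)/\<gamma> - (-a)^2/(2*\<gamma>^2)) \<le> 2"
proof -
  define t where "t = a/\<gamma>"
  have sq: "a^2/(2*\<gamma>^2) = t^2/2" using assms by (simp add: t_def power_divide)
  have e1: "a/\<gamma> = t" "(-a)/\<gamma> = -t" "(-a)^2/(2*\<gamma>^2) = t^2/2"
    using sq by (auto simp: t_def)
  have e2: "exp (t - t^2/2) = exp t * exp (-(t^2/2))" "exp (-t - t^2/2) = exp (-t) * exp (-(t^2/2))"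
    by (subst exp_add[symmetric], simp)+
  have "exp (a/\<gamma> - a^2/(2*\<gamma>^2)) + exp ((-a)/\<gamma> - (-a)^2/(2*\<gamma>^2))
      = (exp t + exp (-t)) * exp (-(t^2/2))"
    unfolding e1 sq e2 by (simp add: distrib_right)
  also have "\<dots> \<le> 2 * exp (t^2/2) * exp (-(t^2/2))"
    by (intro mult_right_mono cosh_le_exp_sq) auto
  also have "\<dots> = 2" by (simp add: exp_minus)
  finally show ?thesis .
qed

lemma psi_le:
  fixes a \<gamma> :: real assumes "\<gamma> > 0"
  shows "a/\<gamma> - a^2/(2*\<gamma>^2) \<le> 1/2"
proof -
  have "a/\<gamma> - a^2/(2*\<gamma>^2) = 1/2 - (a/\<gamma> - 1)^2/2"
    using assms by (simp add: field_simps power2_eq_square)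
  thus ?thesis by simp
qed



lemma (in prob_space) swap_bound:
  fixes h :: "'b \<times> 'b \<Rightarrow> real"
  assumes ind: "indep_var N U N V"
    and eqd: "distr M N V = distr M N U"
    and hm: "h \<in> borel_measurable (N \<Otimes>\<^sub>M N)"
    and hpos: "\<And>x y. x \<in> space N \<Longrightarrow> y \<in> space N \<Longrightarrow> 0 \<le> h (x, y)"
    and hsym: "\<And>x y. x \<in> space N \<Longrightarrow> y \<in> space N \<Longrightarrow> h (x, y) + h (y, x) \<le> 2"
  shows "integral\<^sup>L M (\<lambda>\<omega>. h (U \<omega>, V \<omega>)) \<le> 1"
proof -
  have rvU: "random_variable N U" and rvV: "random_variable N V"
    and J: "distr M N U \<Otimes>\<^sub>M distr M N V = distr M (N \<Otimes>\<^sub>M N) (\<lambda>x. (U x, V x))"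
    using ind unfolding indep_var_distribution_eq by auto
  define D where "D = distr M N U"
  interpret D: prob_space D unfolding D_def by (rule prob_space_distr) fact
  interpret DD: pair_prob_space D D ..
  have J': "D \<Otimes>\<^sub>M D = distr M (N \<Otimes>\<^sub>M N) (\<lambda>x. (U x, V x))"
    using J eqd unfolding D_def by simp
  have spD: "space (D \<Otimes>\<^sub>M D) = space N \<times> space N"
    by (simp add: D_def space_pair_measure)
  have sets: "sets (D \<Otimes>\<^sub>M D) = sets (N \<Otimes>\<^sub>M N)"
    by (simp add: D_def)
  have hm': "h \<in> borel_measurable (D \<Otimes>\<^sub>M D)"
    by (subst measurable_cong_sets[OF sets refl]) (rule hm)
  have hle: "h z \<le> 2" if "z \<in> space (D \<Otimes>\<^sub>M D)" for z
    using that hpos hsym unfolding spD by (cases z) (smt (verit) SigmaE)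
  have int1: "integrable (D \<Otimes>\<^sub>M D) h"
    by (rule DD.integrable_const_bound[where B=2]) (use hle hpos spD hm' in \<open>auto intro!: AE_I2\<close>)
  have hsm: "(\<lambda>(x,y). h (y,x)) \<in> borel_measurable (D \<Otimes>\<^sub>M D)"
    using hm' by measurable
  have int2: "integrable (D \<Otimes>\<^sub>M D) (\<lambda>(x,y). h (y,x))"
    by (rule DD.integrable_const_bound[where B=2]) (use hle hpos spD hsm in \<open>auto intro!: AE_I2\<close>)
  have "integral\<^sup>L M (\<lambda>\<omega>. h (U \<omega>, V \<omega>)) = integral\<^sup>L (D \<Otimes>\<^sub>M D) h"
    unfolding J' by (subst integral_distr) (use hm rvU rvV in auto)
  moreover have sw: "integral\<^sup>L (D \<Otimes>\<^sub>M D) (\<lambda>(x,y). h (y,x)) = integral\<^sup>L (D \<Otimes>\<^sub>M D) h"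
    by (rule DD.integral_product_swap[OF hm'])
  moreover have "integral\<^sup>L (D \<Otimes>\<^sub>M D) (\<lambda>z. h z + (\<lambda>(x,y). h (y,x)) z) \<le> integral\<^sup>L (D \<Otimes>\<^sub>M D) (\<lambda>z. 2)"
    by (rule integral_mono) (use int1 int2 hsym spD in auto)
  moreover have "integral\<^sup>L (D \<Otimes>\<^sub>M D) (\<lambda>z. h z + (\<lambda>(x,y). h (y,x)) z)
     = integral\<^sup>L (D \<Otimes>\<^sub>M D) h + integral\<^sup>L (D \<Otimes>\<^sub>M D) (\<lambda>(x,y). h (y,x))"
    by (rule Bochner_Integration.integral_add[OF int1 int2])
  moreover have "integral\<^sup>L (D \<Otimes>\<^sub>M D) (\<lambda>z. 2::real) = 2"
    by (simp add: DD.prob_space)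
  ultimately show ?thesis by linarith
qed



lemma point_le_nn_count:
  fixes f :: "'c \<Rightarrow> ennreal"
  assumes "x \<in> A"
  shows "f x \<le> (\<integral>\<^sup>+y. f y \<partial>count_space A)"
proof -
  have "(\<integral>\<^sup>+y. f y * indicator {x} y \<partial>count_space A) = f x"
    using assms by (subst nn_integral_count_space'[where A="{x}"]) auto
  moreover have "(\<integral>\<^sup>+y. f y * indicator {x} y \<partial>count_space A) \<le> (\<integral>\<^sup>+y. f y \<partial>count_space A)"
    by (intro nn_integral_mono) (auto simp: indicator_def)
  ultimately show ?thesis by metis
qed

lemma psi_sym2:
  fixes u v \<gamma> :: real assumes "\<gamma> > 0"
  shows "exp ((v-u)/\<gamma> - (v-u)^2/(2*\<gamma>^2)) + exp ((u-v)/\<gamma> - (u-v)^2/(2*\<gamma>^2)) \<le> 2"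
  using psi_sym[OF assms, of "v-u"] by (simp add: power2_commute)

theorem lemma1:
  fixes M :: "'a measure" and N :: "'b measure"
    and X X' :: "nat \<Rightarrow> 'a \<Rightarrow> 'b" and n :: nat
    and G :: "('b \<Rightarrow> real) set" and L :: "('b \<Rightarrow> real) \<Rightarrow> real" and \<gamma> :: real
  assumes "prob_space M"
    and "prob_space.indep_vars M (\<lambda>_. N) (case_sum X X') (Inl ` {..<n} \<union> Inr ` {..<n})"
    and "\<And>i. i < n \<Longrightarrow> distr M N (X' i) = distr M N (X i)"
    and "countable G" and "G \<noteq> {}"
    and "\<And>g. g \<in> G \<Longrightarrow> g \<in> borel_measurable N"
    and "\<And>g. g \<in> G \<Longrightarrow> bounded (g ` space N)"
    and "\<And>g. g \<in> G \<Longrightarrow> L g \<ge> 0"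
    and "(\<lambda>g. exp (- L g)) summable_on G"
    and "(\<Sum>\<^sub>\<infinity>g\<in>G. exp (- L g)) \<le> 1"
    and "\<gamma> > 0"
  shows "integrable M (\<lambda>\<omega>. SUP g\<in>G. Dn n g X' \<omega> - Dn n g X \<omega> - \<gamma> / real n * L g
                                  - 1 / (2 * \<gamma>) * s2 n g X X' \<omega>)
    \<and> prob_space.expectation M (\<lambda>\<omega>. SUP g\<in>G. Dn n g X' \<omega> - Dn n g X \<omega> - \<gamma> / real n * L g
                                  - 1 / (2 * \<gamma>) * s2 n g X X' \<omega>) \<le> 0"
proof -
  interpret prob_space M by fact
  have ind: "indep_vars (\<lambda>_. N) (case_sum X X') (Inl ` {..<n} \<union> Inr ` {..<n})" using assms(2) .
  have rvall: "\<forall>j\<in>Inl ` {..<n} \<union> Inr ` {..<n}. random_variable N (case_sum X X' j)"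
    using ind by (simp add: indep_vars_def)
  have Xm: "X i \<in> measurable M N" if "i \<in> {..<n}" for i
    using bspec[OF rvall, of "Inl i"] that by simp
  have X'm: "X' i \<in> measurable M N" if "i \<in> {..<n}" for i
    using bspec[OF rvall, of "Inr i"] that by simp
  have gm: "g \<in> borel_measurable N" if "g \<in> G" for g using assms(6) that .
  have \<gamma>: "\<gamma> > 0" by fact
  define F where "F g \<omega> = Dn n g X' \<omega> - Dn n g X \<omega> - \<gamma> / real n * L g - 1 / (2 * \<gamma>) * s2 n g X X' \<omega>" for g \<omega>
  define S where "S \<omega> = (SUP g\<in>G. F g \<omega>)" for \<omega>
  have eqS: "(\<lambda>\<omega>. SUP g\<in>G. Dn n g X' \<omega> - Dn n g X \<omega> - \<gamma> / real n * L g
                                  - 1 / (2 * \<gamma>) * s2 n g X X' \<omega>) = S"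
    by (intro ext) (simp add: S_def F_def)
  have "integrable M S \<and> expectation S \<le> 0"
  proof (cases "n = 0")
    case True
    hence "F g \<omega> = 0" for g \<omega> by (simp add: F_def Dn_def s2_def)
    hence "S = (\<lambda>_. 0)" using assms(5) by (simp add: S_def fun_eq_iff)
    thus ?thesis by simp
  next
    case False
    hence npos: "real n > 0" by simp
    define c where "c = real n / \<gamma>"
    have cpos: "c > 0" using npos \<gamma> by (simp add: c_def)
    define psi where "psi a = a/\<gamma> - a^2/(2*\<gamma>^2)" for a :: real
    have psim[measurable]: "psi \<in> borel_measurable borel" unfolding psi_def[abs_def] by measurable
    have psile: "psi a \<le> 1/2" for a unfolding psi_def using psi_le[OF \<gamma>] .
    define A where "A (g::'b \<Rightarrow> real) i \<omega> = (g (X' i \<omega>))^2 - (g (X i \<omega>))^2" for g i \<omega>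
    define Z where "Z g \<omega> = (\<Sum>i<n. psi (A g i \<omega>))" for g \<omega>
    have key: "c * F g \<omega> = Z g \<omega> - L g" for g \<omega>
    proof -
      define SA where "SA = (\<Sum>i<n. A g i \<omega>)"
      define SA2 where "SA2 = (\<Sum>i<n. (A g i \<omega>)^2)"
      have d: "Dn n g X' \<omega> - Dn n g X \<omega> = (1/real n) * SA"
        by (simp add: Dn_def SA_def A_def sum_subtractf right_diff_distrib)
      have s: "s2 n g X X' \<omega> = (1/real n) * SA2"
        by (simp add: s2_def SA2_def A_def power2_commute)
      have z: "Z g \<omega> = SA/\<gamma> - SA2/(2*\<gamma>^2)"
        by (simp add: Z_def psi_def SA_def SA2_def sum_subtractf sum_divide_distrib)
      have "c * F g \<omega> = c * ((1/real n) * SA - \<gamma> / real n * L g - 1 / (2 * \<gamma>) * ((1/real n) * SA2))"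
        unfolding F_def using d s by simp
      also have "\<dots> = SA/\<gamma> - SA2/(2*\<gamma>^2) - L g"
        using npos \<gamma> by (simp add: c_def field_simps power2_eq_square)
      finally show ?thesis using z by simp
    qed
    have Zle: "Z g \<omega> \<le> real n / 2" for g \<omega>
    proof -
      have "Z g \<omega> \<le> of_nat (card {..<n}) * (1/2)"
        unfolding Z_def by (rule sum_bounded_above) (rule psile)
      thus ?thesis by simp
    qed
    have Fle: "F g \<omega> \<le> \<gamma>/2" if "g \<in> G" for g \<omega>
    proof -
      have "c * F g \<omega> \<le> c * (\<gamma>/2)"
        using key[of g \<omega>] Zle[of g \<omega>] assms(8)[OF that] \<gamma> by (simp add: c_def)
      thus ?thesis using cpos by simp
    qed
    have bdd: "bdd_above ((\<lambda>g. F g \<omega>) ` G)" for \<omega>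
      by (rule bdd_aboveI[where M="\<gamma>/2"]) (metis (no_types, lifting) Fle imageE)
    have Sle: "S \<omega> \<le> \<gamma>/2" for \<omega>
      unfolding S_def by (rule cSUP_least[OF assms(5)]) (rule Fle)
    have Sge: "F g \<omega> \<le> S \<omega>" if "g \<in> G" for g \<omega>
      unfolding S_def by (rule cSUP_upper[OF that bdd])
    have Fm: "(\<lambda>\<omega>. F g \<omega>) \<in> borel_measurable M" if "g \<in> G" for g
    proof -
      note [measurable] = Xm X'm gm[OF that]
      show ?thesis unfolding F_def Dn_def s2_def by measurable
    qed
    have Sm: "S \<in> borel_measurable M"
      unfolding S_def[abs_def]
      by (rule borel_measurable_cSUP) (use assms(4) Fm bdd in auto)
    obtain g0 where g0: "g0 \<in> G" using assms(5) by blast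
    obtain B where B: "\<And>x. x \<in> space N \<Longrightarrow> \<bar>g0 x\<bar> \<le> B"
      using assms(7)[OF g0] unfolding bounded_real by blast
    have sq_le: "(g0 x)^2 \<le> B^2" if "x \<in> space N" for x
      using B[OF that] by (metis abs_ge_zero abs_le_square_iff abs_of_nonneg order.trans)
    define K0 where "K0 = B^2 + \<gamma> / real n * L g0 + 1/(2*\<gamma>) * (B^2)^2"
    have K0pos: "K0 \<ge> 0"
      using assms(8)[OF g0] \<gamma> npos unfolding K0_def by (intro add_nonneg_nonneg) auto
    have Fge: "- K0 \<le> F g0 \<omega>" if "\<omega> \<in> space M" for \<omega>
    proof -
      have XN: "X i \<omega> \<in> space N" "X' i \<omega> \<in> space N" if "i \<in> {..<n}" for i
        using measurable_space[OF Xm[OF that]] measurable_space[OF X'm[OF that]] \<open>\<omega> \<in> space M\<close> by auto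
      have "Dn n g0 X' \<omega> \<ge> 0" by (simp add: Dn_def sum_nonneg)
      moreover have "Dn n g0 X \<omega> \<le> B^2"
      proof -
        have "(\<Sum>i<n. (g0 (X i \<omega>))\<^sup>2) \<le> of_nat (card {..<n}) * B^2"
          by (rule sum_bounded_above) (use XN sq_le in auto)
        thus ?thesis using npos by (simp add: Dn_def field_simps)
      qed
      moreover have "s2 n g0 X X' \<omega> \<le> (B^2)^2"
      proof -
        have "((g0 (X i \<omega>))\<^sup>2 - (g0 (X' i \<omega>))\<^sup>2)\<^sup>2 \<le> (B^2)^2" if "i \<in> {..<n}" for i
        proof -
          have "\<bar>(g0 (X i \<omega>))\<^sup>2 - (g0 (X' i \<omega>))\<^sup>2\<bar> \<le> B^2"
            using sq_le[OF XN(1)[OF that]] sq_le[OF XN(2)[OF that]]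
              zero_le_power2[of "g0 (X i \<omega>)"] zero_le_power2[of "g0 (X' i \<omega>)"]
            unfolding abs_le_iff by linarith
          thus ?thesis by (metis abs_ge_zero abs_le_square_iff abs_of_nonneg order.trans power2_abs)
        qed
        hence "(\<Sum>i<n. ((g0 (X i \<omega>))\<^sup>2 - (g0 (X' i \<omega>))\<^sup>2)\<^sup>2) \<le> of_nat (card {..<n}) * (B^2)^2"
          by (intro sum_bounded_above) auto
        thus ?thesis using npos by (simp add: s2_def field_simps)
      qed
      ultimately show ?thesis using \<gamma>
        unfolding F_def K0_def by (smt (verit, best) divide_pos_pos mult_left_mono)
    qed
    have Sbd: "\<bar>S \<omega>\<bar> \<le> \<gamma>/2 + K0" if "\<omega> \<in> space M" for \<omega>
      using Sle[of \<omega>] Sge[OF g0, of \<omega>] Fge[OF that] \<gamma> K0pos unfolding abs_le_iff by linarith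
    have intS: "integrable M S"
      by (rule integrable_const_bound[where B="\<gamma>/2 + K0"]) (use Sbd Sm in auto)
    have Am: "(\<lambda>\<omega>. A g i \<omega>) \<in> borel_measurable M" if "g \<in> G" "i \<in> {..<n}" for g i
    proof -
      note [measurable] = Xm[OF that(2)] X'm[OF that(2)] gm[OF that(1)]
      show ?thesis unfolding A_def by measurable
    qed
    have Zm: "(\<lambda>\<omega>. Z g \<omega>) \<in> borel_measurable M" if "g \<in> G" for g
      unfolding Z_def using Am[OF that] by measurable
    have expsi_bd: "\<bar>exp (psi a)\<bar> \<le> exp (1/2)" for a
      using psile[of a] by simp
    
    have EW: "integral\<^sup>L M (\<lambda>\<omega>. exp (psi (A g i \<omega>))) \<le> 1" if g: "g \<in> G" and i: "i \<in> {..<n}" for g i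
    proof -
      have r: "indep_var (PiM {Inl i} (\<lambda>_. N)) (\<lambda>\<omega>. restrict (\<lambda>j. case_sum X X' j \<omega>) {Inl i})
                         (PiM {Inr i} (\<lambda>_. N)) (\<lambda>\<omega>. restrict (\<lambda>j. case_sum X X' j \<omega>) {Inr i})"
        by (rule indep_var_restrict[OF ind]) (use i in auto)
      have "indep_var N ((\<lambda>f. f (Inl i)) \<circ> (\<lambda>\<omega>. restrict (\<lambda>j. case_sum X X' j \<omega>) {Inl i}))
                      N ((\<lambda>f. f (Inr i)) \<circ> (\<lambda>\<omega>. restrict (\<lambda>j. case_sum X X' j \<omega>) {Inr i}))"
        by (rule indep_var_compose[OF r]) (auto intro: measurable_component_singleton)
      also have "(\<lambda>f. f (Inl i)) \<circ> (\<lambda>\<omega>. restrict (\<lambda>j. case_sum X X' j \<omega>) {Inl i}) = X i"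
        by (auto simp: fun_eq_iff)
      also have "(\<lambda>f. f (Inr i)) \<circ> (\<lambda>\<omega>. restrict (\<lambda>j. case_sum X X' j \<omega>) {Inr i}) = X' i"
        by (auto simp: fun_eq_iff)
      finally have iv: "indep_var N (X i) N (X' i)" .
      define h where "h z = exp (psi ((g (snd z))^2 - (g (fst z))^2))" for z
      have hm: "h \<in> borel_measurable (N \<Otimes>\<^sub>M N)"
      proof -
        note [measurable] = gm[OF g]
        show ?thesis unfolding h_def[abs_def] by measurable
      qed
      have "integral\<^sup>L M (\<lambda>\<omega>. h (X i \<omega>, X' i \<omega>)) \<le> 1"
      proof (rule swap_bound[OF iv assms(3) hm])
        show "i < n" using i by simp
        show "0 \<le> h (x, y)" for x y by (simp add: h_def)
        show "h (x, y) + h (y, x) \<le> 2" for x y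
          unfolding h_def psi_def using psi_sym2[OF \<gamma>] by simp
      qed
      thus ?thesis by (simp add: h_def A_def)
    qed
    
    have EZ: "integrable M (\<lambda>\<omega>. exp (Z g \<omega>)) \<and> integral\<^sup>L M (\<lambda>\<omega>. exp (Z g \<omega>)) \<le> 1" if g: "g \<in> G" for g
    proof -
      have r: "indep_vars (\<lambda>j. PiM {Inl j, Inr j} (\<lambda>_. N))
                 (\<lambda>j \<omega>. restrict (\<lambda>i. case_sum X X' i \<omega>) {Inl j, Inr j}) {..<n}"
        by (rule indep_vars_restrict[OF ind]) (auto simp: disjoint_family_on_def)
      have "indep_vars (\<lambda>_. borel)
          (\<lambda>j \<omega>. (\<lambda>f. exp (psi ((g (f (Inr j)))^2 - (g (f (Inl j)))^2)))
                   (restrict (\<lambda>i. case_sum X X' i \<omega>) {Inl j, Inr j})) {..<n}"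
      proof (rule indep_vars_compose2[OF r])
        fix j assume "j \<in> {..<n}"
        note [measurable] = gm[OF g]
        show "(\<lambda>f. exp (psi ((g (f (Inr j)))^2 - (g (f (Inl j)))^2)))
               \<in> measurable (PiM {Inl j, Inr j} (\<lambda>_. N)) borel"
          by measurable
      qed
      hence iW: "indep_vars (\<lambda>_. borel) (\<lambda>j \<omega>. exp (psi (A g j \<omega>))) {..<n}"
        by (rule indep_vars_cong[THEN iffD1, rotated 3]) (auto simp: A_def)
      have intW: "integrable M (\<lambda>\<omega>. exp (psi (A g j \<omega>)))" if "j \<in> {..<n}" for j
      proof (rule integrable_const_bound[where B="exp (1/2)"])
        show "AE x in M. norm (exp (psi (A g j x))) \<le> exp (1/2)"
          using expsi_bd by (auto intro!: AE_I2)
        show "(\<lambda>\<omega>. exp (psi (A g j \<omega>))) \<in> borel_measurable M"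
          using Am[OF g that] by measurable
      qed
      have eqZ: "exp (Z g \<omega>) = (\<Prod>j<n. exp (psi (A g j \<omega>)))" for \<omega>
        by (simp add: Z_def exp_sum)
      have "integrable M (\<lambda>\<omega>. \<Prod>j<n. exp (psi (A g j \<omega>)))"
        by (rule indep_vars_integrable[OF _ iW intW]) auto
      moreover have "integral\<^sup>L M (\<lambda>\<omega>. \<Prod>j<n. exp (psi (A g j \<omega>))) = (\<Prod>j<n. integral\<^sup>L M (\<lambda>\<omega>. exp (psi (A g j \<omega>))))"
        by (rule indep_vars_lebesgue_integral[OF _ iW intW]) auto
      moreover have "(\<Prod>j<n. integral\<^sup>L M (\<lambda>\<omega>. exp (psi (A g j \<omega>)))) \<le> 1"
        by (rule prod_le_1) (use EW[OF g] in auto)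
      ultimately show ?thesis unfolding eqZ by simp
    qed
    have NZ: "(\<integral>\<^sup>+\<omega>. ennreal (exp (Z g \<omega> - L g)) \<partial>M) \<le> ennreal (exp (- L g))" if g: "g \<in> G" for g
    proof -
      have "(\<integral>\<^sup>+\<omega>. ennreal (exp (Z g \<omega> - L g)) \<partial>M) = (\<integral>\<^sup>+\<omega>. ennreal (exp (- L g)) * ennreal (exp (Z g \<omega>)) \<partial>M)"
        by (intro nn_integral_cong) (simp add: ennreal_mult[symmetric] exp_add[symmetric])
      also have "\<dots> = ennreal (exp (- L g)) * (\<integral>\<^sup>+\<omega>. ennreal (exp (Z g \<omega>)) \<partial>M)"
        by (rule nn_integral_cmult) (use Zm[OF g] in measurable)
      also have "(\<integral>\<^sup>+\<omega>. ennreal (exp (Z g \<omega>)) \<partial>M) = ennreal (integral\<^sup>L M (\<lambda>\<omega>. exp (Z g \<omega>)))"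
        by (rule nn_integral_eq_integral) (use EZ[OF g] in auto)
      also have "ennreal (exp (- L g)) * ennreal (integral\<^sup>L M (\<lambda>\<omega>. exp (Z g \<omega>))) \<le> ennreal (exp (- L g)) * 1"
        by (intro mult_left_mono) (use EZ[OF g] in auto)
      finally show ?thesis by simp
    qed
    have sumL: "(\<integral>\<^sup>+g. ennreal (exp (- L g)) \<partial>count_space G) \<le> 1"
    proof -
      have "(\<lambda>g. norm (exp (- L g))) summable_on G" using assms(9) by simp
      hence ab: "Infinite_Set_Sum.abs_summable_on (\<lambda>g. exp (- L g)) G"
        using abs_summable_equivalent by blast
      hence int: "integrable (count_space G) (\<lambda>g. exp (- L g))"
        by (simp add: Infinite_Set_Sum.abs_summable_on_def)
      have "(\<integral>\<^sup>+g. ennreal (exp (- L g)) \<partial>count_space G) = ennreal (integral\<^sup>L (count_space G) (\<lambda>g. exp (- L g)))"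
        by (rule nn_integral_eq_integral[OF int]) auto
      also have "integral\<^sup>L (count_space G) (\<lambda>g. exp (- L g)) = infsetsum (\<lambda>g. exp (- L g)) G"
        by (simp add: infsetsum_def)
      also have "\<dots> = (\<Sum>\<^sub>\<infinity>g\<in>G. exp (- L g))" by (rule infsetsum_infsum[OF ab])
      finally show ?thesis using assms(10) by simp
    qed
    define T where "T \<omega> = (\<integral>\<^sup>+g. ennreal (exp (Z g \<omega> - L g)) \<partial>count_space G)" for \<omega>
    have ptw: "ennreal (exp (c * S \<omega>)) \<le> T \<omega>" for \<omega>
    proof (cases "T \<omega> = \<top>")
      case True thus ?thesis by simp
    next
      case False
      then obtain t where t: "T \<omega> = ennreal t" "0 \<le> t"
        by (cases "T \<omega>") auto
      have le: "exp (c * F g \<omega>) \<le> t" if g: "g \<in> G" for g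
      proof -
        have "ennreal (exp (Z g \<omega> - L g)) \<le> T \<omega>"
          unfolding T_def by (rule point_le_nn_count[OF g])
        thus ?thesis using t key[of g \<omega>] by simp
      qed
      have tpos: "t > 0" using le[OF g0] by (smt (verit) exp_gt_zero)
      have "F g \<omega> \<le> ln t / c" if g: "g \<in> G" for g
      proof -
        have "c * F g \<omega> \<le> ln t"
          using le[OF g] tpos by (metis exp_le_cancel_iff exp_ln)
        thus ?thesis using cpos by (simp add: field_simps)
      qed
      hence "S \<omega> \<le> ln t / c" unfolding S_def by (intro cSUP_least[OF assms(5)])
      hence "c * S \<omega> \<le> ln t" using cpos by (simp add: field_simps)
      hence "exp (c * S \<omega>) \<le> t" using tpos by (metis exp_le_cancel_iff exp_ln)
      thus ?thesis using t by simp
    qed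
    have Tm: "(\<lambda>\<omega>. ennreal (exp (Z g \<omega> - L g))) \<in> borel_measurable M" if "g \<in> G" for g
      using Zm[OF that] by measurable
    have nnS: "(\<integral>\<^sup>+\<omega>. ennreal (exp (c * S \<omega>)) \<partial>M) \<le> 1"
    proof -
      have "(\<integral>\<^sup>+\<omega>. ennreal (exp (c * S \<omega>)) \<partial>M) \<le> (\<integral>\<^sup>+\<omega>. T \<omega> \<partial>M)"
        by (intro nn_integral_mono ptw)
      also have "\<dots> = (\<integral>\<^sup>+g. (\<integral>\<^sup>+\<omega>. ennreal (exp (Z g \<omega> - L g)) \<partial>M) \<partial>count_space G)"
        unfolding T_def by (rule nn_integral_count_space_nn_integral[OF assms(4) Tm])
      also have "\<dots> \<le> (\<integral>\<^sup>+g. ennreal (exp (- L g)) \<partial>count_space G)"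
        by (intro nn_integral_mono) (use NZ in auto)
      also have "\<dots> \<le> 1" by (rule sumL)
      finally show ?thesis .
    qed
    have expSm: "(\<lambda>\<omega>. exp (c * S \<omega>)) \<in> borel_measurable M" using Sm by measurable
    have intE: "integrable M (\<lambda>\<omega>. exp (c * S \<omega>))"
    proof (rule integrable_const_bound[where B="exp (c * (\<gamma>/2))"])
      show "AE x in M. norm (exp (c * S x)) \<le> exp (c * (\<gamma>/2))"
        using Sle cpos by (auto intro!: AE_I2 mult_left_mono)
    qed (rule expSm)
    have eqE: "ennreal (integral\<^sup>L M (\<lambda>\<omega>. exp (c * S \<omega>))) = (\<integral>\<^sup>+\<omega>. ennreal (exp (c * S \<omega>)) \<partial>M)"
      by (rule nn_integral_eq_integral[symmetric]) (use intE in auto)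
    have "ennreal (integral\<^sup>L M (\<lambda>\<omega>. exp (c * S \<omega>))) \<le> 1" unfolding eqE by (rule nnS)
    hence IE: "integral\<^sup>L M (\<lambda>\<omega>. exp (c * S \<omega>)) \<le> 1" by simp
    have "integral\<^sup>L M (\<lambda>\<omega>. c * S \<omega>) \<le> integral\<^sup>L M (\<lambda>\<omega>. exp (c * S \<omega>) - 1)"
    proof (rule integral_mono)
      show "integrable M (\<lambda>\<omega>. c * S \<omega>)" using intS by simp
      show "integrable M (\<lambda>\<omega>. exp (c * S \<omega>) - 1)" using intE by simp
      show "c * S \<omega> \<le> exp (c * S \<omega>) - 1" for \<omega>
        using exp_ge_add_one_self[of "c * S \<omega>"] by linarith
    qed
    also have "\<dots> = integral\<^sup>L M (\<lambda>\<omega>. exp (c * S \<omega>)) - 1"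
      using intE by (simp add: prob_space)
    finally have "c * expectation S \<le> 0" using IE by simp
    hence "expectation S \<le> 0" using cpos by (simp add: mult_le_0_iff)
    thus ?thesis using intS by simp
  qed
  thus ?thesis unfolding eqS .
qed

end
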